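(* Let $\mathcal{M}$ be a set of models, $c:\mathcal{M}\to(0,\infty)$ a cost function, $\mathcal{S}$ a step neighborhood function and $m_0\in\mathcal{M}$ a base model, as described in the context. Assume that $c(\cdot)$ is bounded, i.e. there is $c_{\max}\in\mathbb{R}$ with $0<c(m)\le c_{\max}$ for all $m\in\mathcal{M}$. (a) Let $m^+,m^-\in\mathcal{M}$ with $\mathcal{P}(m^+)\neq\emptyset$, and suppose that either $\mathcal{L}_{\mathrm{complexity}}(m^+)<\mathcal{L}_{\mathrm{complexity}}(m^-)$, or $\mathcal{L}_{\mathrm{complexity}}(m^+)=\mathcal{L}_{\mathrm{complexity}}(m^-)$ and $c(m^+)<c(m^-)$. Then $$\lim_{\gamma\to+\infty}\big(\mathcal{L}_\gamma(m^-)-\mathcal{L}_\gamma(m^+)\big)=+\infty.$$ (b) Let $\bm{m}^+,\bm{m}^-\in\mathcal{P}$ be interpretable paths with $\bm{c}(\bm{m}^+)\preceq\bm{c}(\bm{m}^-)$, where $\preceq$ is the lexicographic order on $\mathbb{R}^{\mathbb{N}}$. Then $$\lim_{\gamma\to 0}\big(\mathcal{L}_\gamma(\bm{m}^-)-\mathcal{L}_\gamma(\bm{m}^+)\big)\ge 0.$$ Consequently, given models $m^+,m^-\in\mathcal{M}$, if there exists $\bm{m}^+\in\mathcal{P}(m^+)$ such that $\bm{c}(\bm{m}^+)\preceq\bm{c}(\bm{m}^-)$ for all $\bm{m}^-\in\mathcal{P}(m^-)$, then $$\lim_{\gamma\to 0}\big(\mathcal{L}_\gamma(m^-)-\mathcal{L}_\gamma(m^+)\big)\ge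 0.$$
   Context: Setting: $\mathcal{M}$ is a set (of models), $c:\mathcal{M}\to(0,\infty)$ is a cost function, and $\mathcal{S}:\mathcal{M}\to 2^{\mathcal{M}}$ is a step neighborhood function with $\mathcal{S}(m)\neq\emptyset$ for all $m$; $m'$ is "one interpretable step from $m$" iff $m'\in\mathcal{S}(m)$. A fixed base model $m_0\in\mathcal{M}$ is given. An interpretable path of length $K\ge 0$ is a sequence $\bm{m}=(m_1,\dots,m_K)$ of models with $m_k\in\mathcal{S}(m_{k-1})$ for $1\le k\le K$ (starting from $m_0$); its length is $|\bm{m}|=K$, and its final model is $m_K$ (the final model of the length-$0$ path is $m_0$). $\mathcal{P}_K$ is the set of paths of length $K$, $\mathcal{P}=\bigcup_{K\ge0}\mathcal{P}_K$, $\mathcal{P}_K(m)=\{\bm{m}\in\mathcal{P}_K: m_K=m\}$ and $\mathcal{P}(m)=\bigcup_{K\ge0}\mathcal{P}_K(m)$. The model complexity is $\mathcal{L}_{\mathrm{complexity}}(m)=\min_{\bm{m}\in\mathcal{P}(m)}|\bm{m}|$ (equal to $\infty$ if $\mathcal{P}(m)=\emptyset$). The cost sequence of a path $\bm{m}\in\mathcal{P}_K$ is the infinite sequence $\bm{c}(\bm{m})=(c_1,c_2,\dots)$ with $c_k=c(m_k)$ for $k\le K$ and $c_k=0$ for $k>K$. For $\gamma>0$, the path interpretability loss is $\mathcal{L}_\gamma(\bm{m})=\sum_{k=1}^{|\bm{m}|}\gamma^k c(m_k)$, and the model interpretability loss is $\mathcal{L}_\gamma(m)=\infty$ if $\mathcal{P}(m)=\emptyset$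 and $\mathcal{L}_\gamma(m)=\inf_{\bm{m}\in\mathcal{P}(m)}\mathcal{L}_\gamma(\bm{m})$ otherwise. *)

theory Defs
  imports Complex_Main "HOL-Library.Extended_Real"
begin

text \<open>Models form the type 'm (the set M). A path (m_1,...,m_K) is a list;
  it is an interpretable path from the base model m0 if each model is one step
  from its predecessor (m_0 = m0).\<close>

fun is_path_from :: "('m \<Rightarrow> 'm set) \<Rightarrow> 'm \<Rightarrow> 'm list \<Rightarrow> bool" where
  "is_path_from S m [] = True"
| "is_path_from S m (x # xs) = (x \<in> S m \<and> is_path_from S x xs)"

definition final_model :: "'m \<Rightarrow> 'm list \<Rightarrow> 'm" where
  "final_model m0 ms = last (m0 # ms)"

definition paths :: "('m \<Rightarrow> 'm set) \<Rightarrow> 'm \<Rightarrow> 'm list set" where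
  "paths S m0 = {ms. is_path_from S m0 ms}"

definition paths_to :: "('m \<Rightarrow> 'm set) \<Rightarrow> 'm \<Rightarrow> 'm \<Rightarrow> 'm list set" where
  "paths_to S m0 m = {ms \<in> paths S m0. final_model m0 ms = m}"

text \<open>Model complexity (infinity if no path reaches m).\<close>
definition complexity :: "('m \<Rightarrow> 'm set) \<Rightarrow> 'm \<Rightarrow> 'm \<Rightarrow> enat" where
  "complexity S m0 m = (INF ms\<in>paths_to S m0 m. enat (length ms))"

text \<open>Cost sequence c(ms) = (c_1, c_2, ...), indexed from 1; index 0 is a dummy 0
  (it does not affect the lexicographic comparison).\<close>
definition cost_seq :: "('m \<Rightarrow> real) \<Rightarrow> 'm list \<Rightarrow> nat \<Rightarrow> real" where
  "cost_seq c ms k = (if 1 \<le> k \<and> k \<le> length ms then c (ms ! (k - 1)) else 0)"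

definition lex_le :: "(nat \<Rightarrow> real) \<Rightarrow> (nat \<Rightarrow> real) \<Rightarrow> bool" where
  "lex_le x y \<longleftrightarrow> x = y \<or> (\<exists>n. (\<forall>k<n. x k = y k) \<and> x n < y n)"

definition path_loss :: "('m \<Rightarrow> real) \<Rightarrow> real \<Rightarrow> 'm list \<Rightarrow> real" where
  "path_loss c \<gamma> ms = (\<Sum>k=1..length ms. \<gamma> ^ k * c (ms ! (k - 1)))"

text \<open>Model interpretability loss (infinity if no path reaches m).\<close>
definition model_loss :: "('m \<Rightarrow> 'm set) \<Rightarrow> ('m \<Rightarrow> real) \<Rightarrow> 'm \<Rightarrow> real \<Rightarrow> 'm \<Rightarrow> ereal" where
  "model_loss S c m0 \<gamma> m = (INF ms\<in>paths_to S m0 m. ereal (path_loss c \<gamma> ms))"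

end

theory Submission
  imports Defs
begin

lemma pl_nonneg:
  fixes c :: "'m \<Rightarrow> real" and g :: real
  assumes "\<And>m. 0 < c m" "0 \<le> g" shows "0 \<le> path_loss c g ms"
  unfolding path_loss_def using assms by (intro sum_nonneg) (simp add: less_imp_le)

lemma pl_lower:
  fixes c :: "'m \<Rightarrow> real" and g :: real
  assumes "\<And>m. 0 < c m" "0 \<le> g" "ms \<noteq> []"
  shows "g ^ length ms * c (last ms) \<le> path_loss c g ms"
proof -
  have "g ^ length ms * c (ms ! (length ms - 1)) \<le> path_loss c g ms"
    unfolding path_loss_def
    apply (rule member_le_sum[where f="\<lambda>k. g ^ k * c (ms ! (k - 1))"])
    using assms by (auto simp: less_imp_le Suc_le_eq)
  thus ?thesis using assms(3) by (simp add: last_conv_nth)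
qed

lemma pl_upper:
  fixes c :: "'m \<Rightarrow> real" and g cmax :: real
  assumes "\<And>m. 0 < c m" "\<And>m. c m \<le> cmax" "1 \<le> g"
  shows "path_loss c g ms \<le> g ^ length ms * c (final_model bm ms) + length ms * g ^ (length ms - 1) * cmax"
proof (cases ms rule: rev_cases)
  case Nil
  then show ?thesis using assms(1)[of bm] by (simp add: path_loss_def final_model_def less_imp_le)
next
  case (snoc xs x)
  define m where "m = length xs"
  have len: "length ms = Suc m" using snoc m_def by simp
  have cm: "0 \<le> cmax" using assms(1,2) by (meson less_imp_le order_trans)
  have "path_loss c g ms = g ^ Suc m * c (ms ! m) + (\<Sum>k=1..m. g ^ k * c (ms ! (k - 1)))"
    unfolding path_loss_def len by (simp add: add.commute)
  also have "(\<Sum>k=1..m. g ^ k * c (ms ! (k - 1))) \<le> of_nat (card {1..m}) * (g ^ m * cmax)"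
  proof (rule sum_bounded_above)
    fix k assume "k \<in> {1..m}"
    hence "g ^ k \<le> g ^ m" using assms(3) by (intro power_increasing) auto
    moreover have "0 \<le> g ^ k" using assms(3) by simp
    ultimately show "g ^ k * c (ms ! (k - 1)) \<le> g ^ m * cmax"
      using assms(2) cm by (meson mult_mono order_trans zero_le_power assms(3) less_imp_le assms(1) zero_le_one)
  qed
  also have "ms ! m = final_model bm ms" using snoc m_def by (simp add: final_model_def nth_append)
  finally have *: "path_loss c g ms \<le> g ^ Suc m * c (final_model bm ms) + real m * (g ^ m * cmax)" by simp
  have nn: "0 \<le> g ^ m * cmax" using cm assms(3) by simp
  have "real m * (g ^ m * cmax) \<le> real (Suc m) * g ^ m * cmax"
    using nn by (simp add: algebra_simps)
  with * len show ?thesis by simp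
qed

lemma pl_tendsto0: "((\<lambda>g. path_loss c g ms) \<longlongrightarrow> 0) (at_right 0)"
proof -
  have "((\<lambda>g. \<Sum>k=1..length ms. g ^ k * c (ms ! (k - 1))) \<longlongrightarrow> (\<Sum>k=1..length ms. 0 ^ k * c (ms ! (k - 1)))) (at_right 0)"
    by (intro tendsto_intros)
  moreover have "(\<Sum>k=1..length ms. (0::real) ^ k * c (ms ! (k - 1))) = 0"
    by (intro sum.neutral) auto
  ultimately show ?thesis unfolding path_loss_def by simp
qed

lemma key_lim:
  fixes d C :: real assumes "d > 0"
  shows "filterlim (\<lambda>g::real. g ^ n * (g * d - C)) at_top at_top"
proof (rule filterlim_at_top_mono[where f="\<lambda>g. g * d - C"])
  show "filterlim (\<lambda>g::real. g * d - C) at_top at_top"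
  proof -
    have "filterlim (\<lambda>g::real. d * g) at_top at_top"
      using assms by (intro filterlim_tendsto_pos_mult_at_top[OF tendsto_const] filterlim_ident) auto
    hence "filterlim (\<lambda>g::real. - C + d * g) at_top at_top"
      by (intro filterlim_tendsto_add_at_top[OF tendsto_const])
    thus ?thesis by (simp add: mult.commute)
  qed
  have "eventually (\<lambda>g. g \<ge> max 1 (C / d)) at_top" by (rule eventually_ge_at_top)
  thus "eventually (\<lambda>g. g * d - C \<le> g ^ n * (g * d - C)) at_top"
  proof eventually_elim
    case (elim g)
    hence "g * d - C \<ge> 0" using assms by (auto simp: field_simps)
    moreover have "g ^ n \<ge> 1" using elim by auto
    ultimately show ?case by (metis mult_le_cancel_right1 not_le order_less_le_trans zero_less_one mult_right_mono mult_1)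
  qed
qed


lemma ml_le: "q \<in> paths_to S m0 m \<Longrightarrow> model_loss S c m0 g m \<le> ereal (path_loss c g q)"
  unfolding model_loss_def by (rule INF_lower)

lemma ml_ge: "(\<And>q. q \<in> paths_to S m0 m \<Longrightarrow> r \<le> path_loss c g q) \<Longrightarrow> ereal r \<le> model_loss S c m0 g m"
  unfolding model_loss_def by (rule INF_greatest) simp

lemma ml_empty: "paths_to S m0 m = {} \<Longrightarrow> model_loss S c m0 g m = \<infinity>"
  unfolding model_loss_def by (simp add: top_ereal_def)

lemma ml_real:
  fixes c :: "'m \<Rightarrow> real" and g :: real
  assumes "\<And>m. 0 < c m" "0 \<le> g" "q \<in> paths_to S m0 m"
  shows "\<exists>y. model_loss S c m0 g m = ereal y \<and> 0 \<le> y \<and> y \<le> path_loss c g q"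
proof -
  have a: "ereal 0 \<le> model_loss S c m0 g m" by (rule ml_ge, rule pl_nonneg[OF assms(1,2)])
  have b: "model_loss S c m0 g m \<le> ereal (path_loss c g q)" by (rule ml_le[OF assms(3)])
  from a b show ?thesis by (cases "model_loss S c m0 g m") auto
qed

lemma min_path:
  assumes "paths_to S m0 m \<noteq> {}"
  shows "\<exists>p\<in>paths_to S m0 m. complexity S m0 m = enat (length p)"
proof -
  let ?A = "(\<lambda>ms. enat (length ms)) ` paths_to S m0 m"
  have "?A \<noteq> {}" using assms by simp
  then obtain x where "x \<in> ?A" by blast
  hence "(LEAST x. x \<in> ?A) \<in> ?A" by (rule LeastI)
  moreover have "complexity S m0 m = (LEAST x. x \<in> ?A)"
    unfolding complexity_def Inf_enat_def using \<open>?A \<noteq> {}\<close> by simp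
  ultimately show ?thesis by auto
qed

lemma complexity_le: "q \<in> paths_to S m0 m \<Longrightarrow> complexity S m0 m \<le> enat (length q)"
  unfolding complexity_def by (rule INF_lower)

lemma final_nonempty: "q \<noteq> [] \<Longrightarrow> final_model m0 q = last q"
  unfolding final_model_def by simp

theorem theorem1:
  fixes c :: "'m \<Rightarrow> real" and S :: "'m \<Rightarrow> 'm set" and m0 :: 'm and cmax :: real
  assumes S_ne: "\<And>m. S m \<noteq> {}"
    and c_pos: "\<And>m. 0 < c m"
    and c_bdd: "\<And>m. c m \<le> cmax"
  shows
    "(\<forall>mp mm. paths_to S m0 mp \<noteq> {} \<and>
        (complexity S m0 mp < complexity S m0 mm \<or>
         (complexity S m0 mp = complexity S m0 mm \<and> c mp < c mm)) \<longrightarrow>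
        ((\<lambda>\<gamma>. model_loss S c m0 \<gamma> mm - model_loss S c m0 \<gamma> mp) \<longlongrightarrow> \<infinity>) at_top)
   \<and> (\<forall>p q. p \<in> paths S m0 \<and> q \<in> paths S m0 \<and> lex_le (cost_seq c p) (cost_seq c q) \<longrightarrow>
        (\<exists>L::real. ((\<lambda>\<gamma>. path_loss c \<gamma> q - path_loss c \<gamma> p) \<longlongrightarrow> L) (at_right 0) \<and> L \<ge> 0))
   \<and> (\<forall>mp mm. (\<exists>p \<in> paths_to S m0 mp. \<forall>q \<in> paths_to S m0 mm. lex_le (cost_seq c p) (cost_seq c q)) \<longrightarrow>
        (\<exists>L::ereal. ((\<lambda>\<gamma>. model_loss S c m0 \<gamma> mm - model_loss S c m0 \<gamma> mp) \<longlongrightarrow> L) (at_right 0) \<and> L \<ge> 0))"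
proof (intro conjI allI impI)
  fix mp mm
  assume H: "paths_to S m0 mp \<noteq> {} \<and>
        (complexity S m0 mp < complexity S m0 mm \<or>
         (complexity S m0 mp = complexity S m0 mm \<and> c mp < c mm))"
  obtain p where p: "p \<in> paths_to S m0 mp" "complexity S m0 mp = enat (length p)"
    using min_path[OF conjunct1[OF H]] by blast
  define Kp where "Kp = length p"
  have pfin: "final_model m0 p = mp" using p(1) unfolding paths_to_def by simp
  have cm: "0 \<le> cmax" using c_pos[of m0] c_bdd[of m0] by simp
  define U where "U = (\<lambda>g::real. g ^ Kp * c mp + real Kp * g ^ (Kp - 1) * cmax)"
  have Yb: "\<exists>y. model_loss S c m0 g mp = ereal y \<and> y \<le> U g" if g1: "1 \<le> g" for g
  proof -
    obtain y where y: "model_loss S c m0 g mp = ereal y" "y \<le> path_loss c g p"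
      using ml_real[where c=c and g=g, OF c_pos _ p(1)] g1 by auto
    have "path_loss c g p \<le> U g"
      using pl_upper[where c=c and cmax=cmax and g=g and ms=p and bm=m0, OF c_pos c_bdd g1] pfin unfolding U_def Kp_def by simp
    with y show ?thesis by auto
  qed
  show "((\<lambda>\<gamma>. model_loss S c m0 \<gamma> mm - model_loss S c m0 \<gamma> mp) \<longlongrightarrow> \<infinity>) at_top"
  proof (cases "paths_to S m0 mm = {}")
    case True
    show ?thesis unfolding tendsto_PInfty
    proof
      fix r
      have "eventually (\<lambda>g::real. g \<ge> 1) at_top" by (rule eventually_ge_at_top)
      thus "eventually (\<lambda>g. ereal r < model_loss S c m0 g mm - model_loss S c m0 g mp) at_top"
      proof eventually_elim
        case (elim g)
        then obtain y where "model_loss S c m0 g mp = ereal y" using Yb by blast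
        thus ?case using ml_empty[OF True] by simp
      qed
    qed
  next
    case False
    obtain q0 where q0: "q0 \<in> paths_to S m0 mm" "complexity S m0 mm = enat (length q0)"
      using min_path[OF False] by blast
    define Km where "Km = length q0"
    have Kmle: "Km \<le> length q" if "q \<in> paths_to S m0 mm" for q
      using complexity_le[OF that] q0(2) unfolding Km_def by simp
    have qlow: "g ^ Km * c mm \<le> path_loss c g q" if "q \<in> paths_to S m0 mm" "1 \<le> g" "Km \<ge> 1" for q g
    proof -
      have ne: "q \<noteq> []" using Kmle[OF that(1)] that(3) by auto
      have "last q = mm" using that(1) final_nonempty[OF ne, of m0] unfolding paths_to_def by simp
      hence "g ^ length q * c mm \<le> path_loss c g q" using pl_lower[where c=c and g=g, OF c_pos _ ne] that(2) by simp
      moreover have "g ^ Km \<le> g ^ length q" using that(2) Kmle[OF that(1)] by (intro power_increasing) auto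
      ultimately show ?thesis using c_pos[of mm] by (meson mult_right_mono less_imp_le order_trans)
    qed
    have main: "\<exists>n d C. d > 0 \<and> (\<forall>g\<ge>1. \<forall>q\<in>paths_to S m0 mm. g ^ n * (g * d - C) + U g \<le> path_loss c g q)"
    proof (cases "Kp < Km")
      case True
      show ?thesis
      proof (intro exI conjI allI impI ballI)
        show "c mm > 0" by (rule c_pos)
        fix g :: real and q assume g: "1 \<le> g" and q: "q \<in> paths_to S m0 mm"
        have "g ^ (Kp - 1) \<le> g ^ Kp" using g by (intro power_increasing) auto
        hence a: "real Kp * g ^ (Kp - 1) * cmax \<le> real Kp * g ^ Kp * cmax"
          using cm by (simp add: mult_right_mono mult_left_mono)
        have "g ^ Suc Kp \<le> g ^ Km" using g True by (intro power_increasing) auto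
        hence b: "g ^ Suc Kp * c mm \<le> g ^ Km * c mm" using c_pos[of mm] by (simp add: mult_right_mono)
        have "g ^ Km * c mm \<le> path_loss c g q" using qlow[OF q g] True by simp
        with a b show "g ^ Kp * (g * c mm - (c mp + real Kp * cmax)) + U g \<le> path_loss c g q"
          unfolding U_def by (simp add: algebra_simps)
      qed
    next
      case False
      with H p(2) q0(2) have eq: "Km = Kp" and lt: "c mp < c mm" unfolding Km_def Kp_def by auto
      have K1: "Kp \<ge> 1"
      proof (rule ccontr)
        assume "\<not> Kp \<ge> 1"
        hence "p = []" "q0 = []" using eq unfolding Kp_def Km_def by (auto simp: Suc_le_eq)
        hence "mp = m0" "mm = m0" using pfin q0(1) unfolding paths_to_def final_model_def by auto
        thus False using lt by simp
      qed
      show ?thesis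
      proof (intro exI conjI allI impI ballI)
        show "c mm - c mp > 0" using lt by simp
        fix g :: real and q assume g: "1 \<le> g" and q: "q \<in> paths_to S m0 mm"
        have gp: "g ^ (Kp - 1) * g = g ^ Kp" using K1 by (metis Suc_diff_1 less_le_trans power_Suc2 zero_less_one)
        have "g ^ Km * c mm \<le> path_loss c g q" using qlow[OF q g] K1 eq by simp
        moreover have e1: "g ^ (Kp - 1) * (g * (c mm - c mp)) = g ^ Kp * (c mm - c mp)"
          using gp by (metis mult.assoc)
        moreover have e2: "g ^ (Kp - 1) * (g * (c mm - c mp) - real Kp * cmax) = g ^ (Kp - 1) * (g * (c mm - c mp)) - g ^ (Kp - 1) * (real Kp * cmax)"
          by (rule right_diff_distrib)
        moreover have e3: "g ^ (Kp - 1) * (real Kp * cmax) = real Kp * g ^ (Kp - 1) * cmax" by simp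
        moreover have e4: "g ^ Kp * (c mm - c mp) = g ^ Kp * c mm - g ^ Kp * c mp" by (simp add: right_diff_distrib)
        ultimately show "g ^ (Kp - 1) * (g * (c mm - c mp) - real Kp * cmax) + U g \<le> path_loss c g q"
          unfolding U_def eq by linarith
      qed
    qed
    then obtain n d C where d: "d > 0" and nd: "\<And>g q. 1 \<le> g \<Longrightarrow> q \<in> paths_to S m0 mm \<Longrightarrow> g ^ n * (g * d - C) + U g \<le> path_loss c g q"
      by blast
    show ?thesis unfolding tendsto_PInfty
    proof
      fix r
      have "eventually (\<lambda>g. r < g ^ n * (g * d - C)) at_top"
        using key_lim[OF d, of n C] by (simp add: filterlim_at_top_dense)
      moreover have "eventually (\<lambda>g::real. g \<ge> 1) at_top" by (rule eventually_ge_at_top)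
      ultimately show "eventually (\<lambda>g. ereal r < model_loss S c m0 g mm - model_loss S c m0 g mp) at_top"
      proof eventually_elim
        case (elim g)
        then obtain y where y: "model_loss S c m0 g mp = ereal y" "y \<le> U g" using Yb by blast
        have "ereal (g ^ n * (g * d - C) + U g) \<le> model_loss S c m0 g mm"
          by (rule ml_ge) (use nd elim in auto)
        moreover obtain x where x0: "model_loss S c m0 g mm = ereal x"
          using ml_real[where c=c and g=g, OF c_pos _ q0(1)] elim by auto
        ultimately have x: "model_loss S c m0 g mm = ereal x" "g ^ n * (g * d - C) + U g \<le> x" by auto
        show ?case using x y elim by simp
      qed
    qed
  qed
next
  fix p q
  show "\<exists>L::real. ((\<lambda>\<gamma>. path_loss c \<gamma> q - path_loss c \<gamma> p) \<longlongrightarrow> L) (at_right 0) \<and> L \<ge> 0"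
    using tendsto_diff[OF pl_tendsto0[of c q] pl_tendsto0[of c p]] by auto
next
  fix mp mm
  assume "\<exists>p \<in> paths_to S m0 mp. \<forall>q \<in> paths_to S m0 mm. lex_le (cost_seq c p) (cost_seq c q)"
  then obtain p where p: "p \<in> paths_to S m0 mp" by blast
  have evpos: "eventually (\<lambda>g::real. 0 < g) (at_right 0)" by (rule eventually_at_right_less)
  have Yl: "\<exists>y. (\<forall>\<^sub>F g in at_right 0. model_loss S c m0 g mp = ereal (y g)) \<and> (y \<longlongrightarrow> 0) (at_right 0)"
    if p: "p \<in> paths_to S m0 mp" for p mp
  proof -
    define y where "y g = real_of_ereal (model_loss S c m0 g mp)" for g
    have ev: "\<forall>\<^sub>F g in at_right 0. model_loss S c m0 g mp = ereal (y g) \<and> 0 \<le> y g \<and> y g \<le> path_loss c g p"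
      using evpos
    proof eventually_elim
      case (elim g)
      then obtain z where "model_loss S c m0 g mp = ereal z" "0 \<le> z" "z \<le> path_loss c g p"
        using ml_real[where c=c and g=g, OF c_pos _ p] by auto
      thus ?case unfolding y_def by simp
    qed
    have "(y \<longlongrightarrow> 0) (at_right 0)"
    proof (rule tendsto_sandwich[OF _ _ tendsto_const pl_tendsto0[of c p]])
      show "\<forall>\<^sub>F g in at_right 0. 0 \<le> y g" using ev by (rule eventually_mono) auto
      show "\<forall>\<^sub>F g in at_right 0. y g \<le> path_loss c g p" using ev by (rule eventually_mono) auto
    qed
    moreover have "\<forall>\<^sub>F g in at_right 0. model_loss S c m0 g mp = ereal (y g)"
      using ev by (rule eventually_mono) auto
    ultimately show ?thesis by blast
  qed
  obtain y where y: "\<forall>\<^sub>F g in at_right 0. model_loss S c m0 g mp = ereal (y g)" "(y \<longlongrightarrow> 0) (at_right 0)"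
    using Yl[OF p] by blast
  show "\<exists>L::ereal. ((\<lambda>\<gamma>. model_loss S c m0 \<gamma> mm - model_loss S c m0 \<gamma> mp) \<longlongrightarrow> L) (at_right 0) \<and> L \<ge> 0"
  proof (cases "paths_to S m0 mm = {}")
    case True
    have "((\<lambda>\<gamma>. model_loss S c m0 \<gamma> mm - model_loss S c m0 \<gamma> mp) \<longlongrightarrow> \<infinity>) (at_right 0)"
    proof (rule Lim_transform_eventually[OF tendsto_const])
      show "\<forall>\<^sub>F g in at_right 0. \<infinity> = model_loss S c m0 g mm - model_loss S c m0 g mp"
        using y(1) by (rule eventually_mono) (simp add: ml_empty[OF True])
    qed
    thus ?thesis by auto
  next
    case False
    then obtain q where q: "q \<in> paths_to S m0 mm" by blast
    obtain x where x: "\<forall>\<^sub>F g in at_right 0. model_loss S c m0 g mm = ereal (x g)" "(x \<longlongrightarrow> 0) (at_right 0)"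
      using Yl[OF q] by blast
    have lim: "((\<lambda>g. ereal (x g - y g)) \<longlongrightarrow> ereal 0) (at_right 0)"
      using tendsto_ereal[OF tendsto_diff[OF x(2) y(2)]] by simp
    have ev: "\<forall>\<^sub>F g in at_right 0. ereal (x g - y g) = model_loss S c m0 g mm - model_loss S c m0 g mp"
      using x(1) y(1) by eventually_elim simp
    have "((\<lambda>\<gamma>. model_loss S c m0 \<gamma> mm - model_loss S c m0 \<gamma> mp) \<longlongrightarrow> ereal 0) (at_right 0)"
      by (rule Lim_transform_eventually[OF lim ev])
    thus ?thesis by (intro exI[of _ "ereal 0"]) simp
  qed
qed

end
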